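(* For $d\in\mathbb N$, $f\in L^1(\mathbb R^d)\cap L^\infty(\mathbb R^d)$, $E>0$ and $\eta>0$, $$\Big|\int_{\mathbb R^d}\frac{f(q)}{q^2-E\pm i\eta}dq\Big|\le C_1(E,d)\|f\|_\infty\ln\Big(\frac1\eta+1\Big)+\sqrt2\,\|f\|_1,$$ where $C_1(E,d)=\sqrt2\big(E^{-1/2}(E+1)^{\frac{d-1}{2}}+E^{\frac{d-2}{2}}\big)|S_{d-1}|$.
   Context: $q^2=|q|^2$. $|S_{d-1}|$ is the $(d-1)$-dimensional surface measure of the unit sphere in $\mathbb R^d$ (with $|S_0|=2$). *)

theory Defs
  imports "HOL-Analysis.Analysis" "HOL-Probability.Essential_Supremum"
begin

text \<open>Surface measure of the unit sphere S_{d-1} in R^d: 2 pi^(d/2) / Gamma(d/2)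
  (gives 2 for d = 1, 2 pi for d = 2, 4 pi for d = 3).\<close>
definition sphere_area :: "nat \<Rightarrow> real" where
  "sphere_area d = 2 * pi powr (real d / 2) / Gamma (real d / 2)"

definition Linf_enorm :: "('a::euclidean_space \<Rightarrow> 'b::real_normed_vector) \<Rightarrow> ereal" where
  "Linf_enorm f = esssup lborel (\<lambda>q. ereal (norm (f q)))"

text \<open>L^infinity norm (meaningful when Linf_enorm f < infinity).\<close>
definition Linf_norm :: "('a::euclidean_space \<Rightarrow> 'b::real_normed_vector) \<Rightarrow> real" where
  "Linf_norm f = real_of_ereal (Linf_enorm f)"

definition L1_norm :: "('a::euclidean_space \<Rightarrow> 'b::real_normed_vector) \<Rightarrow> real" where
  "L1_norm f = (LINT q|lborel. norm (f q))"

definition C1 :: "real \<Rightarrow> nat \<Rightarrow> real" where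
  "C1 E d = sqrt 2 * (E powr (-1/2) * (E + 1) powr ((real d - 1) / 2)
                      + E powr ((real d - 2) / 2)) * sphere_area d"

end

theory Submission
  imports Defs
begin

lemma sphere_area_eq: "d > 0 \<Longrightarrow> sphere_area d = real d * unit_ball_vol (real d)"
proof -
  assume d: "d > 0"
  have g: "Gamma (real d / 2 + 1) = (real d / 2) * Gamma (real d / 2)"
    using d by (intro Gamma_plus1) (auto simp: nonpos_Ints_def)
  have "Gamma (real d / 2) > 0" using d by auto
  then show ?thesis unfolding sphere_area_def unit_ball_vol_def g
    using d by (simp add: field_simps)
qed

lemma radial_int:
  assumes d: "d > 0" and a: "a > 0"
  shows "(\<integral>\<^sup>+ r. ennreal (indicator {0<..} r * sphere_area d * r^(d-1)) * indicator {..<a} r \<partial>lborel)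
         = ennreal (unit_ball_vol (real d) * a ^ d)"
proof -
  have D: "((\<lambda>r. unit_ball_vol (real d) * r ^ d) has_real_derivative sphere_area d * r^(d-1)) (at r within {0..a})" for r
    using d by (auto intro!: derivative_eq_intros simp: sphere_area_eq)
  have "((\<lambda>r. sphere_area d * r^(d-1)) has_integral (unit_ball_vol (real d) * a ^ d - unit_ball_vol (real d) * 0 ^ d)) {0..a}"
    using a D by (intro fundamental_theorem_of_calculus) (auto simp: has_real_derivative_iff_has_vector_derivative)
  then have "((\<lambda>r. sphere_area d * r^(d-1)) has_integral (unit_ball_vol (real d) * a ^ d)) {0<..<a}"
    using d by (simp add: has_integral_Icc_iff_Ioo zero_power)
  then have "integral\<^sup>N lborel (\<lambda>x. indicator {0<..<a} x * (sphere_area d * x^(d-1))) = unit_ball_vol (real d) * a ^ d"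
    using d by (intro nn_integral_has_integral_lebesgue) (auto simp: sphere_area_eq)
  moreover have "(\<lambda>r. ennreal (indicator {0<..} r * sphere_area d * r^(d-1)) * indicator {..<a} r)
      = (\<lambda>x. ennreal (indicator {0<..<a} x * (sphere_area d * x^(d-1))))"
    by (auto simp: indicator_def fun_eq_iff)
  ultimately show ?thesis by simp
qed

lemma radial_distr:
  "distr (lborel::'a::euclidean_space measure) borel norm
     = density lborel (\<lambda>r. ennreal (indicator {0<..} r * sphere_area DIM('a) * r^(DIM('a)-1)))"
  (is "?M = ?N")
proof (rule measure_eqI_generator_eq_countable[where E="range lessThan" and \<Omega>=UNIV and A="range (\<lambda>n::nat. {..<real n})"])
  show "Int_stable (range lessThan :: real set set)"
  proof (rule Int_stableI, clarify)
    fix a b :: real show "{..<a} \<inter> {..<b} \<in> range lessThan"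
      by (rule image_eqI[of _ _ "min a b"]) auto
  qed
  show "sets ?M = sigma_sets UNIV (range lessThan)" "sets ?N = sigma_sets UNIV (range lessThan)"
    by (simp_all add: borel_Iio)
  show "countable (range (\<lambda>n::nat. {..<real n}))" by simp
  show "\<Union> (range (\<lambda>n::nat. {..<real n})) = UNIV"
    by (auto intro: reals_Archimedean2)
  show "range (\<lambda>n::nat. {..<real n}) \<subseteq> range lessThan" by auto
  show "range lessThan \<subseteq> Pow (UNIV::real set)" by auto
  have eq: "emeasure ?M {..<a} = emeasure ?N {..<a}" for a :: real
  proof (cases "a > 0")
    case True
    have "emeasure ?M {..<a} = emeasure lborel (ball (0::'a) a)"
      by (subst emeasure_distr) (auto simp: ball_def intro!: arg_cong2[where f=emeasure])
    also have "\<dots> = ennreal (unit_ball_vol DIM('a) * a ^ DIM('a))"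
      using True by (simp add: emeasure_ball)
    also have "\<dots> = emeasure ?N {..<a}"
      using True radial_int[of "DIM('a)" a] by (subst emeasure_density) auto
    finally show ?thesis .
  next
    case False
    have "emeasure ?M {..<a} = emeasure lborel ({}::'a set)"
    proof -
      have "norm -` {..<a} = ({}::'a set)" using False
        by auto (meson le_less_trans norm_ge_zero not_less)
      then show ?thesis by (subst emeasure_distr) auto
    qed
    also have "\<dots> = emeasure ?N {..<a}"
    proof -
      have "(\<lambda>r. ennreal (indicator {0<..} r * sphere_area DIM('a) * r^(DIM('a)-1)) * indicator {..<a} r) = (\<lambda>_. 0)"
        using False by (auto simp: indicator_def fun_eq_iff)
      then show ?thesis by (subst emeasure_density) auto
    qed
    finally show ?thesis .
  qed
  then show "\<And>X. X \<in> range lessThan \<Longrightarrow> emeasure ?M X = emeasure ?N X" by auto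
  have fin: "emeasure ?M {..<real n} \<noteq> \<infinity>" for n :: nat
    proof (cases "n = 0")
      case True
      have "norm -` {..<0::real} = ({}::'a set)" 
        using norm_ge_zero not_less by blast
      then show ?thesis using True by (subst emeasure_distr) auto
    next
      case False
      then show ?thesis unfolding eq using radial_int[of "DIM('a)" "real n"] by (subst emeasure_density) auto
    qed
  then show "\<And>X. X \<in> range (\<lambda>n::nat. {..<real n}) \<Longrightarrow> emeasure ?M X \<noteq> \<infinity>" by auto
qed


lemma radial_nn_integral:
  assumes g: "g \<in> borel_measurable borel"
  shows "(\<integral>\<^sup>+q. g (norm q) \<partial>(lborel::'a::euclidean_space measure))
    = (\<integral>\<^sup>+ r. ennreal (indicator {0<..} r * sphere_area DIM('a) * r^(DIM('a)-1)) * g r \<partial>lborel)"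
proof -
  have "(\<integral>\<^sup>+q. g (norm q) \<partial>(lborel::'a measure)) = (\<integral>\<^sup>+r. g r \<partial>(distr (lborel::'a measure) borel norm))"
    using g by (subst nn_integral_distr) auto
  also have "\<dots> = (\<integral>\<^sup>+ r. ennreal (indicator {0<..} r * sphere_area DIM('a) * r^(DIM('a)-1)) * g r \<partial>lborel)"
    unfolding radial_distr using g by (subst nn_integral_density) auto
  finally show ?thesis .
qed

lemma log_int_right:
  assumes c: "c > 0" and U: "U \<ge> 0"
  shows "(\<integral>\<^sup>+ r. ennreal (indicator {p..p+U} r * (1 / ((r - p) + c))) \<partial>lborel) = ennreal (ln ((U + c) / c))"
proof -
  have D: "((\<lambda>r. ln ((r - p) + c)) has_real_derivative 1 / ((r - p) + c)) (at r within {p..p+U})" if "r \<in> {p..p+U}" for r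
    using that c by (auto intro!: derivative_eq_intros)
  have "((\<lambda>r. 1 / ((r - p) + c)) has_integral (ln ((p + U - p) + c) - ln ((p - p) + c))) {p..p+U}"
    using U D by (intro fundamental_theorem_of_calculus) (auto simp: has_real_derivative_iff_has_vector_derivative)
  moreover have "ln ((p + U - p) + c) - ln ((p - p) + c) = ln ((U + c) / c)"
    using c U by (simp add: ln_div)
  ultimately have "((\<lambda>r. 1 / ((r - p) + c)) has_integral ln ((U + c) / c)) {p..p+U}" by simp
  then show ?thesis
    using c by (subst nn_integral_has_integral_lebesgue) auto
qed

lemma log_int_left:
  assumes c: "c > 0" and U: "U \<ge> 0"
  shows "(\<integral>\<^sup>+ r. ennreal (indicator {p-U..p} r * (1 / ((p - r) + c))) \<partial>lborel) = ennreal (ln ((U + c) / c))"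
proof -
  have D: "((\<lambda>r. - ln ((p - r) + c)) has_real_derivative 1 / ((p - r) + c)) (at r within {p-U..p})" if "r \<in> {p-U..p}" for r
    using that c by (auto intro!: derivative_eq_intros simp: field_simps)
  have "((\<lambda>r. 1 / ((p - r) + c)) has_integral (- ln ((p - p) + c) - - ln ((p - (p - U)) + c))) {p-U..p}"
    using U D by (intro fundamental_theorem_of_calculus) (auto simp: has_real_derivative_iff_has_vector_derivative)
  moreover have "- ln ((p - p) + c) - - ln ((p - (p - U)) + c) = ln ((U + c) / c)"
    using c U by (simp add: ln_div)
  ultimately have "((\<lambda>r. 1 / ((p - r) + c)) has_integral ln ((U + c) / c)) {p-U..p}" by simp
  then show ?thesis
    using c by (subst nn_integral_has_integral_lebesgue) auto
qed


lemma sqrt_pow_powr: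
  fixes x :: real assumes "x > 0" "d \<ge> 1"
  shows "sqrt x ^ (d - 1) = x powr ((real d - 1) / 2)"
proof -
  have "sqrt x ^ (d - 1) = sqrt x powr real (d - 1)" by (rule powr_realpow[symmetric]) (use assms in simp)
  also have "\<dots> = (x powr (1/2)) powr real (d - 1)" using assms by (simp add: powr_half_sqrt)
  also have "\<dots> = x powr ((real d - 1) / 2)" using assms by (simp add: powr_powr of_nat_diff)
  finally show ?thesis .
qed

lemma pw_bound:
  fixes r E \<eta> :: real and d :: nat
  assumes r: "r > 0" and rE: "\<bar>r\<^sup>2 - E\<bar> < 1" and E: "E > 0" and \<eta>: "\<eta> > 0" and d: "d \<ge> 1"
  defines "c \<equiv> \<eta> / sqrt E"
  defines "U1 \<equiv> sqrt (E + 1) - sqrt E"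
  defines "U2 \<equiv> sqrt E - sqrt (max 0 (E - 1))"
  defines "a1 \<equiv> (E + 1) powr ((real d - 1) / 2) * E powr (-1/2)"
  defines "a2 \<equiv> E powr ((real d - 2) / 2)"
  shows "r^(d-1) / (\<bar>r\<^sup>2 - E\<bar> + \<eta>) \<le>
     a1 * (indicator {sqrt E..sqrt E + U1} r * (1 / ((r - sqrt E) + c)))
   + a2 * (indicator {sqrt E - U2..sqrt E} r * (1 / ((sqrt E - r) + c)))"
proof -
  have sE: "sqrt E > 0" using E by simp
  have sE2: "sqrt E ^ 2 = E" using E by simp
  have c: "c > 0" using \<eta> sE by (simp add: c_def)
  have "E powr (-1/2) = 1 / sqrt E" using E
    by (simp add: powr_minus_divide powr_half_sqrt)
  note epw = this
  have nn1: "0 \<le> a1 * (indicator {sqrt E..sqrt E + U1} r * (1 / ((r - sqrt E) + c)))"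
    if "r \<ge> sqrt E" using that c by (auto simp: a1_def indicator_def)
  have nn2: "0 \<le> a2 * (indicator {sqrt E - U2..sqrt E} r * (1 / ((sqrt E - r) + c)))"
    if "r \<le> sqrt E" using that c by (auto simp: a2_def indicator_def)
  show ?thesis
  proof (cases "r \<ge> sqrt E")
    case True
    have r1: "r \<le> sqrt (E + 1)" using rE r by (intro real_le_rsqrt) auto
    have ind: "indicator {sqrt E..sqrt E + U1} r = (1::real)" using True r1 by (simp add: U1_def)
    have pw: "r^(d-1) \<le> (E + 1) powr ((real d - 1) / 2)"
    proof -
      have "r^(d-1) \<le> sqrt (E+1) ^ (d-1)" using r1 r by (intro power_mono) auto
      also have "\<dots> = (E + 1) powr ((real d - 1) / 2)" by (rule sqrt_pow_powr) (use E d in auto)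
      finally show ?thesis .
    qed
    have den: "sqrt E * ((r - sqrt E) + c) \<le> \<bar>r\<^sup>2 - E\<bar> + \<eta>"
    proof -
      have "sqrt E * ((r - sqrt E) + c) = sqrt E * (r - sqrt E) + \<eta>" using sE by (simp add: c_def field_simps)
      also have "sqrt E * (r - sqrt E) \<le> (r + sqrt E) * (r - sqrt E)" using True r by (intro mult_right_mono) auto
      also have "(r + sqrt E) * (r - sqrt E) = r\<^sup>2 - E" using sE2 by (simp add: algebra_simps power2_eq_square)
      finally show ?thesis by linarith
    qed
    have "r^(d-1) / (\<bar>r\<^sup>2 - E\<bar> + \<eta>) \<le> (E + 1) powr ((real d - 1) / 2) / (sqrt E * ((r - sqrt E) + c))"
      using pw den sE c True \<eta> by (intro frac_le) auto
    also have "\<dots> = a1 * (indicator {sqrt E..sqrt E + U1} r * (1 / ((r - sqrt E) + c)))"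
      unfolding a1_def ind epw by simp
    finally show ?thesis using nn2[of] True by (cases "r = sqrt E") (auto simp: indicator_def a2_def)
  next
    case False
    have r1: "r \<ge> sqrt (max 0 (E - 1))" using rE r
      by (intro real_le_lsqrt) (auto simp: max_def)
    have ind: "indicator {sqrt E - U2..sqrt E} r = (1::real)" using False r1 by (simp add: U2_def)
    have pw: "r^(d-1) \<le> E powr ((real d - 1) / 2)"
    proof -
      have "r^(d-1) \<le> sqrt E ^ (d-1)" using False r by (intro power_mono) auto
      also have "\<dots> = E powr ((real d - 1) / 2)" by (rule sqrt_pow_powr) (use E d in auto)
      finally show ?thesis .
    qed
    have den: "sqrt E * ((sqrt E - r) + c) \<le> \<bar>r\<^sup>2 - E\<bar> + \<eta>"
    proof -
      have "sqrt E * ((sqrt E - r) + c) = sqrt E * (sqrt E - r) + \<eta>" using sE by (simp add: c_def field_simps)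
      also have "sqrt E * (sqrt E - r) \<le> (sqrt E + r) * (sqrt E - r)" using False r by (intro mult_right_mono) auto
      also have "(sqrt E + r) * (sqrt E - r) = E - r\<^sup>2" using sE2 by (simp add: algebra_simps power2_eq_square)
      finally show ?thesis by linarith
    qed
    have "r^(d-1) / (\<bar>r\<^sup>2 - E\<bar> + \<eta>) \<le> E powr ((real d - 1) / 2) / (sqrt E * ((sqrt E - r) + c))"
      using pw den sE c False \<eta> by (intro frac_le) auto
    also have "\<dots> = a2 * (indicator {sqrt E - U2..sqrt E} r * (1 / ((sqrt E - r) + c)))"
    proof -
      have "E powr ((real d - 2) / 2) = E powr ((real d - 1) / 2) * E powr (-1/2)"
        using E by (simp add: powr_add[symmetric] diff_divide_distrib)
      then show ?thesis unfolding a2_def ind epw by simp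
    qed
    finally show ?thesis using nn1 False by (auto simp: indicator_def a1_def)
  qed
qed


lemma sphere_area_pos: "d > 0 \<Longrightarrow> sphere_area d > 0"
  unfolding sphere_area_def by (auto intro!: divide_pos_pos)

lemma ln_ratio_bound:
  fixes E \<eta> U :: real
  assumes E: "E > 0" and \<eta>: "\<eta> > 0" and U: "U \<ge> 0" "U * sqrt E \<le> 1"
  shows "ln ((U + \<eta> / sqrt E) / (\<eta> / sqrt E)) \<le> ln (1 / \<eta> + 1)"
proof -
  have sE: "sqrt E > 0" using E by simp
  have "(U + \<eta> / sqrt E) / (\<eta> / sqrt E) = U * sqrt E / \<eta> + 1"
    using sE \<eta> by (simp add: field_simps)
  moreover have "U * sqrt E / \<eta> \<le> 1 / \<eta>" using U \<eta> by (simp add: divide_right_mono)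
  moreover have "U * sqrt E / \<eta> \<ge> 0" using U sE \<eta> by simp
  ultimately show ?thesis by simp
qed

lemma shell_bound:
  fixes E \<eta> :: real and d :: nat
  assumes E: "E > 0" and \<eta>: "\<eta> > 0" and d: "d \<ge> 1"
  shows "(\<integral>\<^sup>+ r. ennreal (indicator {0<..} r * sphere_area d * r^(d-1))
            * ennreal (indicator {r. \<bar>r\<^sup>2 - E\<bar> < 1} r * (sqrt 2 / (\<bar>r\<^sup>2 - E\<bar> + \<eta>))) \<partial>lborel)
         \<le> ennreal (C1 E d * ln (1 / \<eta> + 1))"
proof -
  define c where "c = \<eta> / sqrt E"
  define U1 where "U1 = sqrt (E + 1) - sqrt E"
  define U2 where "U2 = sqrt E - sqrt (max 0 (E - 1))"
  define a1 where "a1 = (E + 1) powr ((real d - 1) / 2) * E powr (-1/2)"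
  define a2 where "a2 = E powr ((real d - 2) / 2)"
  define K where "K = sqrt 2 * sphere_area d"
  define L where "L = ln (1 / \<eta> + 1)"
  have sE: "sqrt E > 0" using E by simp
  have c: "c > 0" using \<eta> sE by (simp add: c_def)
  have S: "sphere_area d > 0" using d sphere_area_pos by simp
  have K: "K > 0" using S by (simp add: K_def)
  have a1: "a1 \<ge> 0" by (simp add: a1_def)
  have a2: "a2 \<ge> 0" by (simp add: a2_def)
  have U1: "U1 \<ge> 0" "U1 * sqrt E \<le> 1"
  proof -
    show "U1 \<ge> 0" using E by (simp add: U1_def)
    have "sqrt (E+1) * sqrt E \<le> E + 1"
    proof -
      have "sqrt (E+1) * sqrt E = sqrt ((E+1) * E)" by (simp add: real_sqrt_mult)
      also have "\<dots> \<le> sqrt ((E+1)^2)" using E by (intro real_sqrt_le_mono) (auto simp: power2_eq_square)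
      finally show ?thesis using E by simp
    qed
    then show "U1 * sqrt E \<le> 1" using E by (simp add: U1_def algebra_simps)
  qed
  have U2: "U2 \<ge> 0" "U2 * sqrt E \<le> 1"
  proof -
    show "U2 \<ge> 0" using E by (auto simp: U2_def max_def)
    show "U2 * sqrt E \<le> 1"
    proof (cases "E \<le> 1")
      case True then show ?thesis using E by (simp add: U2_def max_def)
    next
      case False
      have "E - 1 \<le> sqrt (E - 1) * sqrt E"
      proof -
        have "E - 1 = sqrt ((E - 1)^2)" using False by simp
        also have "\<dots> \<le> sqrt ((E - 1) * E)" using False by (intro real_sqrt_le_mono) (auto simp: power2_eq_square)
        finally show ?thesis by (simp add: real_sqrt_mult)
      qed
      then show ?thesis using False E by (simp add: U2_def max_def algebra_simps)
    qed
  qed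
  define g1 where "g1 r = indicator {sqrt E..sqrt E + U1} r * (1 / ((r - sqrt E) + c))" for r :: real
  define g2 where "g2 r = indicator {sqrt E - U2..sqrt E} r * (1 / ((sqrt E - r) + c))" for r :: real
  have g1: "g1 r \<ge> 0" for r using c by (auto simp: g1_def indicator_def)
  have g2: "g2 r \<ge> 0" for r using c by (auto simp: g2_def indicator_def)
  have pt: "ennreal (indicator {0<..} r * sphere_area d * r^(d-1))
            * ennreal (indicator {r. \<bar>r\<^sup>2 - E\<bar> < 1} r * (sqrt 2 / (\<bar>r\<^sup>2 - E\<bar> + \<eta>)))
         \<le> ennreal (K * a1) * ennreal (g1 r) + ennreal (K * a2) * ennreal (g2 r)" for r
  proof (cases "r > 0 \<and> \<bar>r\<^sup>2 - E\<bar> < 1")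
    case True
    have "sphere_area d * r^(d-1) * (sqrt 2 / (\<bar>r\<^sup>2 - E\<bar> + \<eta>)) = K * (r^(d-1) / (\<bar>r\<^sup>2 - E\<bar> + \<eta>))"
      by (simp add: K_def)
    also have "\<dots> \<le> K * (a1 * g1 r + a2 * g2 r)"
      using pw_bound[of r E \<eta> d] True E \<eta> d K
      unfolding g1_def g2_def c_def U1_def U2_def a1_def a2_def
      by (intro mult_left_mono) auto
    finally have "sphere_area d * r^(d-1) * (sqrt 2 / (\<bar>r\<^sup>2 - E\<bar> + \<eta>)) \<le> K * a1 * g1 r + K * a2 * g2 r"
      by (simp add: algebra_simps)
    then show ?thesis using True K a1 a2 g1 g2 S
      by (simp add: ennreal_mult'[symmetric] ennreal_plus[symmetric] ennreal_leI del: ennreal_plus ennreal_le_iff)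
  next
    case False
    then show ?thesis by (auto simp: indicator_def)
  qed
  have "(\<integral>\<^sup>+ r. ennreal (indicator {0<..} r * sphere_area d * r^(d-1))
            * ennreal (indicator {r. \<bar>r\<^sup>2 - E\<bar> < 1} r * (sqrt 2 / (\<bar>r\<^sup>2 - E\<bar> + \<eta>))) \<partial>lborel)
      \<le> (\<integral>\<^sup>+ r. ennreal (K * a1) * ennreal (g1 r) + ennreal (K * a2) * ennreal (g2 r) \<partial>lborel)"
    by (intro nn_integral_mono pt)
  also have "\<dots> = ennreal (K * a1) * (\<integral>\<^sup>+ r. ennreal (g1 r) \<partial>lborel) + ennreal (K * a2) * (\<integral>\<^sup>+ r. ennreal (g2 r) \<partial>lborel)"
    unfolding g1_def g2_def by (subst nn_integral_add) (auto simp: nn_integral_cmult)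
  also have "(\<integral>\<^sup>+ r. ennreal (g1 r) \<partial>lborel) = ennreal (ln ((U1 + c) / c))"
    unfolding g1_def using log_int_right[OF c U1(1), of "sqrt E"] by simp
  also have "(\<integral>\<^sup>+ r. ennreal (g2 r) \<partial>lborel) = ennreal (ln ((U2 + c) / c))"
    unfolding g2_def using log_int_left[OF c U2(1), of "sqrt E"] by simp
  also have "ennreal (K * a1) * ennreal (ln ((U1 + c) / c)) + ennreal (K * a2) * ennreal (ln ((U2 + c) / c))
      \<le> ennreal (K * a1) * ennreal L + ennreal (K * a2) * ennreal L"
    using ln_ratio_bound[OF E \<eta> U1] ln_ratio_bound[OF E \<eta> U2]
    by (intro add_mono mult_left_mono ennreal_leI) (auto simp: c_def L_def)
  also have "\<dots> = ennreal (C1 E d * L)"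
  proof -
    have L: "L \<ge> 0" using \<eta> by (simp add: L_def)
    have "C1 E d = K * a1 + K * a2"
      by (simp add: C1_def K_def a1_def a2_def algebra_simps)
    then show ?thesis using K a1 a2 L
      by (simp add: ennreal_mult'[symmetric] ennreal_plus[symmetric] distrib_right del: ennreal_plus)
  qed
  finally show ?thesis by (simp add: L_def)
qed


lemma Linf_facts:
  fixes f :: "'a::euclidean_space \<Rightarrow> 'b::real_normed_vector"
  assumes "Linf_enorm f < \<infinity>"
  shows "Linf_norm f \<ge> 0" "AE q in lborel. norm (f q) \<le> Linf_norm f"
proof -
  have ae: "AE q in lborel. ereal (norm (f q)) \<le> Linf_enorm f"
    unfolding Linf_enorm_def by (rule esssup_AE)
  have "\<exists>q. ereal (norm (f q)) \<le> Linf_enorm f"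
  proof (rule ccontr)
    assume nq: "\<not> (\<exists>q. ereal (norm (f q)) \<le> Linf_enorm f)"
    have "AE q in (lborel::'a measure). False" using ae by eventually_elim (use nq in auto)
    then have "ae_filter (lborel::'a measure) = bot" by (simp add: eventually_False)
    then show False by (simp add: ae_filter_eq_bot_iff)
  qed
  then obtain q where "ereal (norm (f q)) \<le> Linf_enorm f" by blast
  then have nn: "Linf_enorm f \<ge> 0" 
    using order_trans[of 0 "ereal (norm (f q))" "Linf_enorm f"] by simp
  then have eq: "Linf_enorm f = ereal (Linf_norm f)"
    using assms unfolding Linf_norm_def by (cases "Linf_enorm f") auto
  show "Linf_norm f \<ge> 0" using nn eq by simp
  show "AE q in lborel. norm (f q) \<le> Linf_norm f" using ae by (simp add: eq)
qed

lemma den_bound: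
  fixes t \<eta> \<sigma> :: real
  assumes "\<sigma> \<in> {-1, 1}" "\<eta> > 0"
  shows "cmod (complex_of_real t + \<sigma> * \<i> * \<eta>) \<ge> \<bar>t\<bar>"
    "cmod (complex_of_real t + \<sigma> * \<i> * \<eta>) \<ge> (\<bar>t\<bar> + \<eta>) / sqrt 2"
    "cmod (complex_of_real t + \<sigma> * \<i> * \<eta>) > 0"
proof -
  have c: "cmod (complex_of_real t + \<sigma> * \<i> * \<eta>) = sqrt (t^2 + \<eta>^2)"
    using assms by (auto simp: cmod_def)
  show "cmod (complex_of_real t + \<sigma> * \<i> * \<eta>) \<ge> \<bar>t\<bar>"
    unfolding c by (rule real_le_rsqrt) simp
  show "cmod (complex_of_real t + \<sigma> * \<i> * \<eta>) > 0"
    unfolding c using assms by (simp add: add_nonneg_pos)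
  have "(\<bar>t\<bar> + \<eta>)^2 \<le> 2 * (t^2 + \<eta>^2)"
  proof -
    have "0 \<le> (\<bar>t\<bar> - \<eta>)^2" by simp
    then show ?thesis by (simp add: power2_eq_square algebra_simps)
  qed
  then have "\<bar>t\<bar> + \<eta> \<le> sqrt 2 * sqrt (t^2 + \<eta>^2)"
    using assms by (subst real_sqrt_mult[symmetric]) (intro real_le_rsqrt, auto)
  then show "cmod (complex_of_real t + \<sigma> * \<i> * \<eta>) \<ge> (\<bar>t\<bar> + \<eta>) / sqrt 2"
    unfolding c by (simp add: divide_le_eq mult.commute)
qed

theorem lemma21:
  fixes f :: "'a::euclidean_space \<Rightarrow> complex"
    and E \<eta> \<sigma> :: real
  assumes "integrable lborel f"
    and "Linf_enorm f < \<infinity>"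
    and "E > 0" and "\<eta> > 0"
    and "\<sigma> \<in> {-1, 1}"
  shows "cmod (LINT q|lborel. f q / (complex_of_real (norm q ^ 2 - E) + \<sigma> * \<i> * \<eta>))
           \<le> C1 E DIM('a) * Linf_norm f * ln (1 / \<eta> + 1) + sqrt 2 * L1_norm f"
proof -
  note int = assms(1) and E = assms(3) and \<eta> = assms(4) and \<sigma> = assms(5)
  have fm[measurable]: "f \<in> borel_measurable lborel" using int by auto
  define M where "M = Linf_norm f"
  have M: "M \<ge> 0" and aeM: "AE q in lborel. norm (f q) \<le> M"
    using Linf_facts[OF assms(2)] by (auto simp: M_def)
  define D where "D q = complex_of_real (norm q ^ 2 - E) + \<sigma> * \<i> * \<eta>" for q :: 'a
  define L where "L = ln (1 / \<eta> + 1)"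
  have L: "L \<ge> 0" using \<eta> by (simp add: L_def)
  define d where "d = DIM('a)"
  have d: "d \<ge> 1" by (simp add: d_def DIM_positive Suc_leI)
  have C: "C1 E d \<ge> 0" 
    using sphere_area_pos[of d] d by (simp add: C1_def)
  define h where "h r = indicator {r. \<bar>r\<^sup>2 - E\<bar> < 1} r * (sqrt 2 / (\<bar>r\<^sup>2 - E\<bar> + \<eta>))" for r :: real
  have h: "h r \<ge> 0" for r using \<eta> by (auto simp: h_def indicator_def)
  have pt: "AE q in lborel. ennreal (norm (f q / D q)) \<le> ennreal (norm (f q)) + ennreal M * ennreal (h (norm q))"
    using aeM
  proof (rule eventually_mono)
    fix q assume fq: "norm (f q) \<le> M"
    have Dp: "cmod (D q) > 0" and D1: "cmod (D q) \<ge> \<bar>norm q ^ 2 - E\<bar>"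
      and D2: "cmod (D q) \<ge> (\<bar>norm q ^ 2 - E\<bar> + \<eta>) / sqrt 2"
      using den_bound[OF \<sigma> \<eta>, of "norm q ^ 2 - E"] by (auto simp: D_def)
    have "norm (f q / D q) \<le> norm (f q) + M * h (norm q)"
    proof (cases "\<bar>norm q ^ 2 - E\<bar> < 1")
      case True
      have "norm (f q / D q) = norm (f q) / cmod (D q)" by (simp add: norm_divide)
      also have "\<dots> \<le> M / ((\<bar>norm q ^ 2 - E\<bar> + \<eta>) / sqrt 2)"
        using fq D2 \<eta> M by (intro frac_le) auto
      also have "\<dots> = M * h (norm q)" using True by (simp add: h_def)
      finally show ?thesis using norm_ge_zero[of "f q"] by linarith
    next
      case False
      have "norm (f q / D q) = norm (f q) / cmod (D q)" by (simp add: norm_divide)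
      also have "\<dots> \<le> norm (f q) / 1"
        using D1 False by (intro divide_left_mono) auto
      finally show ?thesis using M h[of "norm q"] mult_nonneg_nonneg[of M "h (norm q)"] by linarith
    qed
    then show "ennreal (norm (f q / D q)) \<le> ennreal (norm (f q)) + ennreal M * ennreal (h (norm q))"
      using M h[of "norm q"] by (simp add: ennreal_mult'[symmetric] ennreal_plus[symmetric] ennreal_leI del: ennreal_plus ennreal_le_iff)
  qed
  have L1nn: "L1_norm f \<ge> 0" unfolding L1_norm_def by simp
  have L1: "(\<integral>\<^sup>+ q. ennreal (norm (f q)) \<partial>lborel) = ennreal (L1_norm f)"
    unfolding L1_norm_def using int by (intro nn_integral_eq_integral) auto
  have hm[measurable]: "h \<in> borel_measurable borel" unfolding h_def by measurable
  have rad: "(\<integral>\<^sup>+ q. ennreal (h (norm q)) \<partial>(lborel::'a measure)) \<le> ennreal (C1 E d * L)"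
  proof -
    have "(\<integral>\<^sup>+ q. ennreal (h (norm q)) \<partial>(lborel::'a measure))
      = (\<integral>\<^sup>+ r. ennreal (indicator {0<..} r * sphere_area DIM('a) * r^(DIM('a)-1)) * ennreal (h r) \<partial>lborel)"
      by (rule radial_nn_integral[where g="\<lambda>r. ennreal (h r)"]) measurable
    also have "\<dots> \<le> ennreal (C1 E d * L)"
      unfolding h_def L_def d_def using shell_bound[OF E \<eta>, of "DIM('a)"] d by (simp add: d_def)
    finally show ?thesis .
  qed
  have "(\<integral>\<^sup>+ q. ennreal (norm (f q / D q)) \<partial>lborel)
      \<le> (\<integral>\<^sup>+ q. ennreal (norm (f q)) + ennreal M * ennreal (h (norm q)) \<partial>lborel)"
    by (rule nn_integral_mono_AE[OF pt])
  also have "\<dots> = ennreal (L1_norm f) + ennreal M * (\<integral>\<^sup>+ q. ennreal (h (norm q)) \<partial>(lborel::'a measure))"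
    by (subst nn_integral_add) (auto simp: nn_integral_cmult L1)
  also have "\<dots> \<le> ennreal (L1_norm f) + ennreal M * ennreal (C1 E d * L)"
    by (intro add_mono mult_left_mono rad) auto
  also have "\<dots> = ennreal (L1_norm f + M * (C1 E d * L))"
    using M C L L1nn by (simp add: ennreal_mult'[symmetric] ennreal_plus[symmetric] del: ennreal_plus)
  finally have bnd: "(\<integral>\<^sup>+ q. ennreal (norm (f q / D q)) \<partial>lborel) \<le> ennreal (L1_norm f + M * (C1 E d * L))" .
  have "cmod (LINT q|lborel. f q / D q) \<le> (LINT q|lborel. norm (f q / D q))"
    by (rule integral_norm_bound)
  also have "\<dots> = enn2real (\<integral>\<^sup>+ q. ennreal (norm (f q / D q)) \<partial>lborel)"
    by (rule integral_eq_nn_integral) (auto simp: D_def)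
  also have "\<dots> \<le> L1_norm f + M * (C1 E d * L)"
    using bnd L1nn M C L by (intro enn2real_leI) auto
  also have "\<dots> \<le> C1 E d * M * L + sqrt 2 * L1_norm f"
  proof -
    have "L1_norm f \<le> sqrt 2 * L1_norm f" using L1nn by (simp add: mult_le_cancel_right1)
    then show ?thesis by (simp add: algebra_simps)
  qed
  finally show ?thesis by (simp add: D_def M_def L_def d_def)
qed

end
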